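(* Let $\Gamma$ be a weighted digraph with normalized matrix of maximum out-forests $\bar J$, let $K$ be the vertex set of a basis bicomponent of $\Gamma$, and let $K^+$ be the set of vertices reachable by directed paths from $K$ and unreachable from all other basis bicomponents. Then: (1) the normalized matrix of maximum out-forests of the restriction $\Gamma_K$ of $\Gamma$ to $K$ coincides with the principal submatrix of $\bar J$ indexed by $K$; (2) if $i\in K^+$ and $j\in K^+\setminus K$ and $\Gamma$ has an arc $(i,j)$, then $\bar J$ does not change when the (positive) weight of this arc is varied.
   Context: A weighted digraph $\Gamma$ has no loops and each arc $(i,j)$ (from $i$ to $j$) has a positive weight. A diverging tree is a rooted directed tree with directed paths from its root to all its other vertices; an out-forest of a digraph is a spanning subgraph whose weak components are diverging trees; a maximum out-forest is one with the maximum number of arcs. The weight of a subgraph is the product of its arc weights. The normalized matrix of maximum out-forests $\bar J$ of a digraph has $(i,j)$ entry equal to the total weight of its maximum out-forests in which $i$ belongs to the tree rooted at $j$, divided by the total weight of all its maximum out-forests. A basis bicomponent is a strong component into which no arc enters from outside it. *)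

theory Defs
  imports Complex_Main
begin

definition weighted_digraph :: "'a set \<Rightarrow> ('a \<times> 'a) set \<Rightarrow> ('a \<times> 'a \<Rightarrow> real) \<Rightarrow> bool" where
  "weighted_digraph V E w \<longleftrightarrow> finite V \<and> E \<subseteq> V \<times> V \<and> (\<forall>v. (v, v) \<notin> E) \<and> (\<forall>e\<in>E. w e > 0)"

definition weak_component :: "'a set \<Rightarrow> ('a \<times> 'a) set \<Rightarrow> 'a \<Rightarrow> 'a set" where
  "weak_component V F v = {u \<in> V. (v, u) \<in> (F \<union> F\<inverse>)\<^sup>*}"

definition diverging_tree :: "'a set \<Rightarrow> ('a \<times> 'a) set \<Rightarrow> bool" where
  "diverging_tree C F \<longleftrightarrow> finite C \<and> C \<noteq> {} \<and> card F = card C - 1 \<and> F \<subseteq> C \<times> C \<and>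
     (\<exists>r\<in>C. \<forall>v\<in>C. (r, v) \<in> F\<^sup>*)"

definition out_forest :: "'a set \<Rightarrow> ('a \<times> 'a) set \<Rightarrow> ('a \<times> 'a) set \<Rightarrow> bool" where
  "out_forest V E F \<longleftrightarrow> F \<subseteq> E \<and>
     (\<forall>v\<in>V. diverging_tree (weak_component V F v)
                (F \<inter> (weak_component V F v \<times> weak_component V F v)))"

definition max_out_forests :: "'a set \<Rightarrow> ('a \<times> 'a) set \<Rightarrow> ('a \<times> 'a) set set" where
  "max_out_forests V E = {F. out_forest V E F \<and> (\<forall>G. out_forest V E G \<longrightarrow> card G \<le> card F)}"

definition subgraph_weight :: "('a \<times> 'a \<Rightarrow> real) \<Rightarrow> ('a \<times> 'a) set \<Rightarrow> real" where
  "subgraph_weight w F = (\<Prod>e\<in>F. w e)"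

definition in_tree_rooted_at :: "('a \<times> 'a) set \<Rightarrow> 'a \<Rightarrow> 'a \<Rightarrow> bool" where
  "in_tree_rooted_at F i j \<longleftrightarrow> (j, i) \<in> F\<^sup>* \<and> (\<forall>k. (k, j) \<notin> F)"

definition Jbar :: "'a set \<Rightarrow> ('a \<times> 'a) set \<Rightarrow> ('a \<times> 'a \<Rightarrow> real) \<Rightarrow> 'a \<Rightarrow> 'a \<Rightarrow> real" where
  "Jbar V E w i j =
     (\<Sum>F\<in>{F\<in>max_out_forests V E. in_tree_rooted_at F i j}. subgraph_weight w F)
     / (\<Sum>F\<in>max_out_forests V E. subgraph_weight w F)"

definition strong_component :: "'a set \<Rightarrow> ('a \<times> 'a) set \<Rightarrow> 'a \<Rightarrow> 'a set" where
  "strong_component V E v = {u \<in> V. (u, v) \<in> E\<^sup>* \<and> (v, u) \<in> E\<^sup>*}"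

definition basis_bicomponent :: "'a set \<Rightarrow> ('a \<times> 'a) set \<Rightarrow> 'a set \<Rightarrow> bool" where
  "basis_bicomponent V E K \<longleftrightarrow> (\<exists>v\<in>V. K = strong_component V E v) \<and>
     (\<forall>u v. (u, v) \<in> E \<and> u \<notin> K \<and> v \<in> K \<longrightarrow> False)"

definition reach_plus :: "'a set \<Rightarrow> ('a \<times> 'a) set \<Rightarrow> 'a set \<Rightarrow> 'a set" where
  "reach_plus V E K = {v \<in> V. (\<exists>k\<in>K. (k, v) \<in> E\<^sup>*) \<and>
     (\<forall>K'. basis_bicomponent V E K' \<and> K' \<noteq> K \<longrightarrow> \<not> (\<exists>k\<in>K'. (k, v) \<in> E\<^sup>*))}"

end

theory Submission imports Defs begin

definition indeg1 :: "('a \<times> 'a) set \<Rightarrow> bool" where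
  "indeg1 F \<longleftrightarrow> (\<forall>u u' v. (u,v)\<in>F \<longrightarrow> (u',v)\<in>F \<longrightarrow> u = u')"

definition pclosed :: "('a \<times> 'a) set \<Rightarrow> 'a set \<Rightarrow> bool" where
  "pclosed G S \<longleftrightarrow> (\<forall>u v. (u,v)\<in>G \<longrightarrow> v\<in>S \<longrightarrow> u\<in>S)"

lemma L_bwd:
  assumes "pclosed G S" "(x,y) \<in> G\<^sup>*" "y \<in> S"
  shows "(x,y) \<in> (G \<inter> (S \<times> S))\<^sup>* \<and> x \<in> S"
  using assms(2)
proof (induction rule: converse_rtrancl_induct)
  case base then show ?case using assms(3) by simp
next
  case (step x x')
  then have "x \<in> S" using assms(1) unfolding pclosed_def by blast
  have e: "(x,x') \<in> G \<inter> (S \<times> S)" using step(1,3) \<open>x \<in> S\<close> by blast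
  have "(x',y) \<in> (G \<inter> (S \<times> S))\<^sup>*" using step(3) by blast
  then have "(x,y) \<in> (G \<inter> (S \<times> S))\<^sup>*" by (rule converse_rtrancl_into_rtrancl[OF e])
  then show ?case using \<open>x \<in> S\<close> by blast
qed

lemma L_fwd:
  assumes "pclosed G S" "(x,y) \<in> G\<^sup>*" "x \<notin> S"
  shows "(x,y) \<in> (G \<inter> ((-S) \<times> (-S)))\<^sup>* \<and> y \<notin> S"
  using assms(2)
proof (induction rule: rtrancl_induct)
  case base then show ?case using assms(3) by simp
next
  case (step y z)
  then have "z \<notin> S" using assms(1) unfolding pclosed_def by blast
  have e: "(y,z) \<in> G \<inter> ((-S) \<times> (-S))" using step(2,3) \<open>z \<notin> S\<close> by blast
  have "(x,y) \<in> (G \<inter> ((-S) \<times> (-S)))\<^sup>*" using step(3) by blast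
  then have "(x,z) \<in> (G \<inter> ((-S) \<times> (-S)))\<^sup>*" using e by (rule rtrancl.rtrancl_into_rtrancl)
  then show ?case using \<open>z \<notin> S\<close> by blast
qed

lemma acyclic_split:
  assumes "pclosed G S" "acyclic (G \<inter> (S \<times> S))" "acyclic (G \<inter> ((-S) \<times> (-S)))"
  shows "acyclic G"
  unfolding acyclic_def
proof
  fix x show "(x,x) \<notin> G\<^sup>+"
  proof
    assume c: "(x,x) \<in> G\<^sup>+"
    show False
    proof (cases "x \<in> S")
      case True
      obtain x' where x': "(x,x') \<in> G" "(x',x) \<in> G\<^sup>*" using tranclD[OF c] by blast
      have h: "(x',x) \<in> (G \<inter> (S \<times> S))\<^sup>* \<and> x' \<in> S" using L_bwd[OF assms(1) x'(2) True] .
      then have "(x,x') \<in> G \<inter> (S \<times> S)" using x'(1) True by simp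
      then have "(x,x) \<in> (G \<inter> (S \<times> S))\<^sup>+"
        by (rule rtrancl_into_trancl2[OF _ conjunct1[OF h]])
      then show False using assms(2) by (simp add: acyclic_def)
    next
      case False
      obtain q where q: "(x,q) \<in> G\<^sup>*" "(q,x) \<in> G" using tranclD2[OF c] by blast
      have h: "(x,q) \<in> (G \<inter> ((-S) \<times> (-S)))\<^sup>* \<and> q \<notin> S" using L_fwd[OF assms(1) q(1) False] .
      then have "(q,x) \<in> G \<inter> ((-S) \<times> (-S))" using q(2) False by simp
      then have "(x,x) \<in> (G \<inter> ((-S) \<times> (-S)))\<^sup>+"
        by (rule rtrancl_into_trancl1[OF conjunct1[OF h]])
      then show False using assms(3) by (simp add: acyclic_def)
    qed
  qed
qed

lemma root_exists:
  assumes "finite F" "acyclic F"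
  shows "\<exists>j. in_tree_rooted_at F i j"
proof -
  have wf: "wf F" by (rule finite_acyclic_wf[OF assms])
  have ii: "i \<in> {a. (a,i) \<in> F\<^sup>*}" by simp
  obtain z where z: "z \<in> {a. (a,i) \<in> F\<^sup>*}" "\<And>y. (y,z) \<in> F \<Longrightarrow> y \<notin> {a. (a,i) \<in> F\<^sup>*}"
    by (rule wfE_min[OF wf ii]) blast
  have "\<forall>k. (k,z) \<notin> F"
  proof (intro allI notI)
    fix k assume "(k,z) \<in> F"
    moreover have "(z,i) \<in> F\<^sup>*" using z(1) by simp
    ultimately have "(k,i) \<in> F\<^sup>*" by (rule converse_rtrancl_into_rtrancl)
    moreover note \<open>(k,z) \<in> F\<close>
    ultimately show False using z(2) by blast
  qed
  then show ?thesis using z(1) unfolding in_tree_rooted_at_def by blast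
qed

lemma anc_linear:
  assumes "indeg1 F" "(a,y) \<in> F\<^sup>*" "(b,y) \<in> F\<^sup>*"
  shows "(a,b) \<in> F\<^sup>* \<or> (b,a) \<in> F\<^sup>*"
  using assms(2,3)
proof (induction rule: rtrancl_induct)
  case base then show ?case by simp
next
  case (step y z)
  show ?case
  proof (cases "b = z")
    case True then show ?thesis using step(1,2) by (simp add: rtrancl.rtrancl_into_rtrancl)
  next
    case False
    have "(b,z) \<in> F\<^sup>+" using step(4) False by (simp add: rtrancl_eq_or_trancl)
    then obtain q where "(b,q) \<in> F\<^sup>*" "(q,z) \<in> F" using tranclD2 by metis
    then have "q = y" using step(2) assms(1) unfolding indeg1_def by blast
    then show ?thesis using step \<open>(b,q) \<in> F\<^sup>*\<close> by blast
  qed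
qed

lemma root_reach:
  assumes "(a,b) \<in> F\<^sup>*" "\<forall>k. (k,b) \<notin> F"
  shows "a = b"
proof (rule ccontr)
  assume "a \<noteq> b"
  then have "(a,b) \<in> F\<^sup>+" using assms(1) by (simp add: rtrancl_eq_or_trancl)
  then obtain q where "(q,b) \<in> F" using tranclD2 by metis
  then show False using assms(2) by blast
qed

lemma root_unique:
  assumes "indeg1 F" "in_tree_rooted_at F i j" "in_tree_rooted_at F i j'"
  shows "j = j'"
proof -
  have a: "(j,i) \<in> F\<^sup>*" "\<forall>k. (k,j) \<notin> F" using assms(2) unfolding in_tree_rooted_at_def by auto
  have b: "(j',i) \<in> F\<^sup>*" "\<forall>k. (k,j') \<notin> F" using assms(3) unfolding in_tree_rooted_at_def by auto
  have "(j,j') \<in> F\<^sup>* \<or> (j',j) \<in> F\<^sup>*" by (rule anc_linear[OF assms(1) a(1) b(1)])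
  then show ?thesis
  proof
    assume "(j,j') \<in> F\<^sup>*" then show ?thesis using root_reach[OF _ b(2)] by blast
  next
    assume "(j',j) \<in> F\<^sup>*" then show ?thesis using root_reach[OF _ a(2)] by blast
  qed
qed

lemma cycle_anc:
  assumes "indeg1 F" "(x,x) \<in> F\<^sup>+" "(y,x) \<in> F\<^sup>*"
  shows "(x,y) \<in> F\<^sup>*"
  using assms(3)
proof (induction rule: converse_rtrancl_induct)
  case base then show ?case by simp
next
  case (step y y')
  show ?case
  proof (cases "x = y'")
    case True
    obtain q where "(x,q) \<in> F\<^sup>*" "(q,x) \<in> F" using tranclD2[OF assms(2)] by blast
    then show ?thesis using True step(1) assms(1) unfolding indeg1_def by blast
  next
    case False
    then have "(x,y') \<in> F\<^sup>+" using step(3) False by (simp add: rtrancl_eq_or_trancl)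
    then obtain q where "(x,q) \<in> F\<^sup>*" "(q,y') \<in> F" using tranclD2 by metis
    then show ?thesis using step(1) assms(1) unfolding indeg1_def by blast
  qed
qed


lemma wc_pclosed:
  assumes "F \<subseteq> V \<times> V" "C = weak_component V F v"
  shows "pclosed F C"
  unfolding pclosed_def
proof (intro allI impI)
  fix a b assume ab: "(a,b) \<in> F" "b \<in> C"
  then have "a \<in> V" using assms(1) by blast
  have "(v,b) \<in> (F \<union> F\<inverse>)\<^sup>*" using ab(2) assms(2) unfolding weak_component_def by blast
  moreover have "(b,a) \<in> F \<union> F\<inverse>" using ab(1) by blast
  ultimately have "(v,a) \<in> (F \<union> F\<inverse>)\<^sup>*" by (rule rtrancl.rtrancl_into_rtrancl)
  then show "a \<in> C" using \<open>a \<in> V\<close> assms(2) unfolding weak_component_def by blast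
qed

lemma comp_props:
  assumes "out_forest V E F" "v \<in> V"
  shows "\<exists>r\<in>weak_component V F v. (\<forall>y\<in>weak_component V F v. (r,y) \<in> (Restr F (weak_component V F v))\<^sup>*)
     \<and> (\<forall>p. (p,r) \<notin> Restr F (weak_component V F v)) \<and> inj_on snd (Restr F (weak_component V F v))"
proof -
  define C where "C = weak_component V F v"
  define FC where "FC = Restr F C"
  have dt: "diverging_tree C FC" using assms unfolding out_forest_def C_def FC_def by blast
  then obtain r where r: "r \<in> C" "\<forall>y\<in>C. (r,y) \<in> FC\<^sup>*" unfolding diverging_tree_def by blast
  have finC: "finite C" and cardFC: "card FC = card C - 1" and FCsub: "FC \<subseteq> C \<times> C"
    using dt unfolding diverging_tree_def by auto
  have finFC: "finite FC" using finC FCsub finite_subset by blast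
  have sub: "C - {r} \<subseteq> snd ` FC"
  proof
    fix y assume y: "y \<in> C - {r}"
    have "(r,y) \<in> FC\<^sup>*" using r(2) y by blast
    then have "(r,y) \<in> FC\<^sup>+" using y by (auto simp: rtrancl_eq_or_trancl)
    then obtain q where "(q,y) \<in> FC" using tranclD2 by metis
    then show "y \<in> snd ` FC" by force
  qed
  have img: "snd ` FC \<subseteq> C" using FCsub by force
  have c1: "card (snd ` FC) \<le> card FC" using finFC card_image_le by blast
  have c2: "card (C - {r}) = card C - 1" using r(1) finC by simp
  have c3: "card (C - {r}) \<le> card (snd ` FC)" using sub finFC card_mono by blast
  have "card (snd ` FC) = card FC" using c1 c2 c3 cardFC by linarith
  then have inj: "inj_on snd FC" using finFC inj_on_iff_eq_card by blast
  have "C - {r} = snd ` FC"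
    using card_subset_eq[OF finite_imageI[OF finFC] sub] c1 c2 c3 cardFC by linarith
  then have "\<forall>p. (p,r) \<notin> FC" by force
  then show ?thesis using r inj unfolding C_def FC_def by blast
qed

lemma of_imp:
  assumes EV: "E \<subseteq> V \<times> V" and of: "out_forest V E F"
  shows "F \<subseteq> E \<and> indeg1 F \<and> acyclic F"
proof -
  have FE: "F \<subseteq> E" using of unfolding out_forest_def by blast
  then have FV: "F \<subseteq> V \<times> V" using EV by blast
  have ind: "indeg1 F" unfolding indeg1_def
  proof (intro allI impI)
    fix u u' v assume uv: "(u,v) \<in> F" "(u',v) \<in> F"
    then have v: "v \<in> V" using FV by blast
    define C where "C = weak_component V F v"
    have vC: "v \<in> C" using v unfolding C_def weak_component_def by blast
    have pc: "pclosed F C" using wc_pclosed[OF FV] C_def by blast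
    have "u \<in> C" "u' \<in> C" using pc uv vC unfolding pclosed_def by blast+
    then have "(u,v) \<in> Restr F C" "(u',v) \<in> Restr F C" using uv vC by blast+
    moreover have "inj_on snd (Restr F C)" using comp_props[OF of v] unfolding C_def by blast
    ultimately have "(u,v) = (u',v)" using inj_onD[of snd "Restr F C" "(u,v)" "(u',v)"] by simp
    then show "u = u'" by simp
  qed
  have "\<forall>x. (x,x) \<notin> F\<^sup>+"
  proof (intro allI notI)
    fix x assume c: "(x,x) \<in> F\<^sup>+"
    then obtain x' where "(x,x') \<in> F" using tranclD by metis
    then have x: "x \<in> V" using FV by blast
    define C where "C = weak_component V F x"
    have pc: "pclosed F C" using wc_pclosed[OF FV] C_def by blast
    obtain r where r: "r \<in> C" "\<forall>y\<in>C. (r,y) \<in> (Restr F C)\<^sup>*" "\<forall>p. (p,r) \<notin> Restr F C"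
      using comp_props[OF of x] unfolding C_def by blast
    have xC: "x \<in> C" using x unfolding C_def weak_component_def by blast
    have "(r,x) \<in> F\<^sup>*" using r(2) xC rtrancl_mono[of "Restr F C" F] by blast
    moreover have "(x,r) \<in> F\<^sup>*" using cycle_anc[OF ind c calculation] .
    ultimately have "(r,r) \<in> F\<^sup>+" using c by (meson rtrancl_trancl_trancl trancl_rtrancl_trancl)
    then obtain p where "(p,r) \<in> F" using tranclD2 by metis
    moreover then have "p \<in> C" using pc r(1) unfolding pclosed_def by blast
    ultimately show False using r(1,3) by blast
  qed
  then show ?thesis using FE ind unfolding acyclic_def by blast
qed

lemma imp_of:
  assumes EV: "E \<subseteq> V \<times> V" and FE: "F \<subseteq> E" and ind: "indeg1 F" and ac: "acyclic F" and finV: "finite V"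
  shows "out_forest V E F"
  unfolding out_forest_def
proof (intro conjI ballI)
  show "F \<subseteq> E" by fact
  have FV: "F \<subseteq> V \<times> V" using EV FE by blast
  have finF: "finite F" using finite_subset[OF FV] finV by blast
  fix v assume v: "v \<in> V"
  define C where "C = weak_component V F v"
  have pc: "pclosed F C" using wc_pclosed[OF FV] C_def by blast
  obtain r where r: "in_tree_rooted_at F v r" using root_exists[OF finF ac] by blast
  have all: "in_tree_rooted_at F y r" if "(v,y) \<in> (F \<union> F\<inverse>)\<^sup>*" for y
    using that
  proof (induction rule: rtrancl_induct)
    case base then show ?case using r by simp
  next
    case (step y z)
    have ry: "(r,y) \<in> F\<^sup>*" and rr: "\<forall>k. (k,r) \<notin> F" using step(3) unfolding in_tree_rooted_at_def by auto
    show ?case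
    proof (cases "(y,z) \<in> F")
      case True
      have "(r,z) \<in> F\<^sup>*" by (rule rtrancl.rtrancl_into_rtrancl[OF ry True])
      then show ?thesis using rr unfolding in_tree_rooted_at_def by simp
    next
      case False
      then have zy: "(z,y) \<in> F" using step(2) by blast
      obtain r' where r': "in_tree_rooted_at F z r'" using root_exists[OF finF ac] by blast
      have "(r',z) \<in> F\<^sup>*" using r' unfolding in_tree_rooted_at_def by simp
      then have "(r',y) \<in> F\<^sup>*" by (rule rtrancl.rtrancl_into_rtrancl[OF _ zy])
      then have "in_tree_rooted_at F y r'" using r' unfolding in_tree_rooted_at_def by simp
      then have "r' = r" using root_unique[OF ind _ step(3)] by blast
      then show ?thesis using r' by simp
    qed
  qed
  have rv: "(r,v) \<in> F\<^sup>*" using r unfolding in_tree_rooted_at_def by blast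
  have rV: "r \<in> V"
  proof (cases "r = v")
    case True then show ?thesis using v by simp
  next
    case False
    then have "(r,v) \<in> F\<^sup>+" using rv by (simp add: rtrancl_eq_or_trancl)
    then obtain y where "(r,y) \<in> F" using tranclD by metis
    then show ?thesis using FV by blast
  qed
  have "(v,r) \<in> (F\<inverse>)\<^sup>*" using rv by (simp add: rtrancl_converse)
  then have "(v,r) \<in> (F \<union> F\<inverse>)\<^sup>*" using rtrancl_mono[of "F\<inverse>" "F \<union> F\<inverse>"] by blast
  then have rC: "r \<in> C" using rV unfolding C_def weak_component_def by blast
  have allC: "in_tree_rooted_at F y r" if "y \<in> C" for y
    using all that unfolding C_def weak_component_def by blast
  have vC: "v \<in> C" using v unfolding C_def weak_component_def by blast
  have finC: "finite C" using finV unfolding C_def weak_component_def by simp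
  have reach: "\<forall>y\<in>C. (r,y) \<in> (Restr F C)\<^sup>*"
  proof
    fix y assume "y \<in> C"
    then have "(r,y) \<in> F\<^sup>*" using allC unfolding in_tree_rooted_at_def by blast
    then show "(r,y) \<in> (Restr F C)\<^sup>*" using L_bwd[OF pc _ \<open>y \<in> C\<close>] by blast
  qed
  have img: "snd ` (Restr F C) = C - {r}"
  proof
    show "snd ` (Restr F C) \<subseteq> C - {r}" using r unfolding in_tree_rooted_at_def by force
    show "C - {r} \<subseteq> snd ` (Restr F C)"
    proof
      fix y assume y: "y \<in> C - {r}"
      then have "(r,y) \<in> F\<^sup>*" using allC unfolding in_tree_rooted_at_def by blast
      then have "(r,y) \<in> F\<^sup>+" using y by (auto simp: rtrancl_eq_or_trancl)
      then obtain q where q: "(q,y) \<in> F" using tranclD2 by metis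
      then have "q \<in> C" using pc y unfolding pclosed_def by blast
      then have "(q,y) \<in> Restr F C" using q y by blast
      then show "y \<in> snd ` (Restr F C)" by force
    qed
  qed
  have inj: "inj_on snd (Restr F C)" using ind unfolding indeg1_def inj_on_def by auto
  have "card (Restr F C) = card C - 1"
    using card_image[OF inj] img rC finC by simp
  then show "diverging_tree (weak_component V F v) (Restr F (weak_component V F v))"
    unfolding diverging_tree_def C_def[symmetric] using finC vC reach rC by blast
qed


lemma of_char:
  assumes "finite V" "E \<subseteq> V \<times> V"
  shows "out_forest V E F \<longleftrightarrow> F \<subseteq> E \<and> indeg1 F \<and> acyclic F"
  using of_imp[OF assms(2)] imp_of[OF assms(2) _ _ _ assms(1)] by blast

lemma indeg1_subset: "indeg1 F \<Longrightarrow> G \<subseteq> F \<Longrightarrow> indeg1 G"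
  unfolding indeg1_def by blast

lemma indeg1_insert: "indeg1 F \<Longrightarrow> (\<forall>a. (a,x) \<notin> F) \<Longrightarrow> indeg1 (insert (u,x) F)"
  unfolding indeg1_def by blast

lemma max_finite:
  assumes "finite V" "E \<subseteq> V \<times> V"
  shows "finite (max_out_forests V E)"
proof -
  have "finite E" using assms finite_subset by blast
  moreover have "max_out_forests V E \<subseteq> Pow E"
    unfolding max_out_forests_def out_forest_def by blast
  ultimately show ?thesis using finite_subset by blast
qed

lemma max_nonempty:
  assumes "finite V" "E \<subseteq> V \<times> V"
  shows "max_out_forests V E \<noteq> {}"
proof -
  have finE: "finite E" using finite_subset[OF assms(2)] assms(1) by simp
  have "out_forest V E {}" by (subst of_char[OF assms]) (simp add: indeg1_def acyclic_def)
  moreover have "\<forall>G. out_forest V E G \<longrightarrow> card G < card E + 1"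
  proof (intro allI impI)
    fix G assume "out_forest V E G"
    then have "G \<subseteq> E" unfolding out_forest_def by blast
    then show "card G < card E + 1" using card_mono[OF finE, of G] by simp
  qed
  ultimately have "\<exists>F. out_forest V E F \<and> (\<forall>G. out_forest V E G \<longrightarrow> card G \<le> card F)"
    by (rule ex_has_greatest_nat[of "out_forest V E" "{}" card "card E + 1"])
  then obtain F where "out_forest V E F" "\<forall>G. out_forest V E G \<longrightarrow> card G \<le> card F" by blast
  then show ?thesis unfolding max_out_forests_def by blast
qed

lemma cross_arc:
  assumes "(z,v) \<in> E\<^sup>*" "z \<notin> T" "v \<in> T"
  shows "\<exists>u x. (u,x) \<in> E \<and> u \<notin> T \<and> x \<in> T"
  using assms(1,3)
proof (induction rule: rtrancl_induct)
  case base then show ?case using assms(2) by simp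
next
  case (step y v')
  show ?case
  proof (cases "y \<in> T")
    case True then show ?thesis using step(3) by blast
  next
    case False then show ?thesis using step(2,4) by (intro exI[of _ y] exI[of _ v']) simp
  qed
qed

lemma root_lemma:
  assumes finV: "finite V" and EV: "E \<subseteq> V \<times> V"
  shows "F \<in> max_out_forests V E \<Longrightarrow> (\<forall>k. (k,v) \<notin> F) \<Longrightarrow> v \<in> V \<Longrightarrow> (z,v) \<in> E\<^sup>*
     \<Longrightarrow> (v,z) \<notin> F\<^sup>* \<Longrightarrow> False"
proof (induction "card {y\<in>V. (v,y) \<in> F\<^sup>*}" arbitrary: F rule: less_induct)
  case less
  define T where "T = {y\<in>V. (v,y) \<in> F\<^sup>*}"
  have ofF: "out_forest V E F" and maxF: "\<forall>G. out_forest V E G \<longrightarrow> card G \<le> card F"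
    using less.prems(1) unfolding max_out_forests_def by blast+
  have FE: "F \<subseteq> E" and ind: "indeg1 F" and ac: "acyclic F" using of_imp[OF EV ofF] by auto
  have finE: "finite E" using finite_subset[OF EV] finV by simp
  have finF: "finite F" using FE finE finite_subset by blast
  have finT: "finite T" using finV unfolding T_def by simp
  have zT: "z \<notin> T" using less.prems(5) unfolding T_def by blast
  have vT: "v \<in> T" using less.prems(3) unfolding T_def by blast
  obtain u x where ux: "(u,x) \<in> E" "u \<notin> T" "x \<in> T" using cross_arc[OF less.prems(4) zT vT] by blast
  have uV: "u \<in> V" using ux(1) EV by blast
  have vu: "(v,u) \<notin> F\<^sup>*" using ux(2) uV unfolding T_def by blast
  have vx: "(v,x) \<in> F\<^sup>*" using ux(3) unfolding T_def by blast
  show False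
  proof (cases "x = v")
    case True
    define F2 where "F2 = insert (u,v) F"
    have "indeg1 F2" unfolding F2_def using indeg1_insert[OF ind] less.prems(2) by blast
    moreover have "acyclic F2" unfolding F2_def using ac vu by simp
    moreover have "F2 \<subseteq> E" unfolding F2_def using FE ux(1) True by blast
    ultimately have "out_forest V E F2" using imp_of[OF EV _ _ _ finV] by blast
    then have "card F2 \<le> card F" using maxF by blast
    moreover have "card F2 = card F + 1" unfolding F2_def using finF less.prems(2) by simp
    ultimately show False by simp
  next
    case False
    then have "(v,x) \<in> F\<^sup>+" using vx by (simp add: rtrancl_eq_or_trancl)
    then obtain p where p: "(v,p) \<in> F\<^sup>*" "(p,x) \<in> F" using tranclD2 by metis
    have pV: "p \<in> V" using p(2) FE EV by blast
    then have pT: "p \<in> T" using p(1) unfolding T_def by blast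
    have up: "u \<noteq> p" using pT ux(2) by blast
    have uxF: "(u,x) \<notin> F" using ind p(2) up unfolding indeg1_def by blast
    define F1 where "F1 = F - {(p,x)}"
    define F2 where "F2 = insert (u,x) F1"
    have ind1: "indeg1 F1" using indeg1_subset[OF ind] unfolding F1_def by blast
    have nox: "\<forall>a. (a,x) \<notin> F1" using ind p(2) unfolding F1_def indeg1_def by blast
    have indF2: "indeg1 F2" unfolding F2_def using indeg1_insert[OF ind1 nox] .
    have xu: "(x,u) \<notin> F1\<^sup>*"
    proof
      assume "(x,u) \<in> F1\<^sup>*"
      then have "(x,u) \<in> F\<^sup>*" using rtrancl_mono[of F1 F] unfolding F1_def by blast
      then have "(v,u) \<in> F\<^sup>*" by (rule rtrancl_trans[OF vx])
      then show False using vu by blast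
    qed
    have acF1: "acyclic F1" by (rule acyclic_subset[OF ac]) (auto simp: F1_def)
    have acF2: "acyclic F2" unfolding F2_def using acF1 xu by simp
    have F2E: "F2 \<subseteq> E" unfolding F2_def F1_def using FE ux(1) by blast
    have ofF2: "out_forest V E F2" using imp_of[OF EV F2E indF2 acF2 finV] .
    have "card F1 = card F - 1" unfolding F1_def using p(2) finF by simp
    moreover have "card F2 = card F1 + 1" unfolding F2_def using uxF finF unfolding F1_def by simp
    moreover have "F \<noteq> {}" using p(2) by blast
    then have "card F \<ge> 1" using finF by (simp add: Suc_le_eq card_gt_0_iff)
    ultimately have cF2: "card F2 = card F" by simp
    have maxF2: "F2 \<in> max_out_forests V E" using ofF2 maxF cF2 unfolding max_out_forests_def by simp
    have rootv: "\<forall>k. (k,v) \<notin> F2" using less.prems(2) False unfolding F2_def F1_def by blast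
    have claim: "(v,y) \<in> F\<^sup>* \<and> y \<noteq> x" if "(v,y) \<in> F2\<^sup>*" for y
      using that
    proof (induction rule: rtrancl_induct)
      case base then show ?case using False by simp
    next
      case (step y y')
      show ?case
      proof (cases "(y,y') = (u,x)")
        case True then show ?thesis using step(3) vu by simp
      next
        case ne: False
        then have yy: "(y,y') \<in> F" "(y,y') \<noteq> (p,x)" using step(2) unfolding F2_def F1_def by blast+
        have "(v,y) \<in> F\<^sup>*" using step(3) by blast
        then have "(v,y') \<in> F\<^sup>*" by (rule rtrancl.rtrancl_into_rtrancl[OF _ yy(1)])
        moreover have "y' \<noteq> x" using yy ind p(2) unfolding indeg1_def by blast
        ultimately show ?thesis by blast
      qed
    qed
    have "{y\<in>V. (v,y) \<in> F2\<^sup>*} \<subseteq> T - {x}" using claim unfolding T_def by blast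
    then have "{y\<in>V. (v,y) \<in> F2\<^sup>*} \<subset> T" using ux(3) by blast
    then have "card {y\<in>V. (v,y) \<in> F2\<^sup>*} < card T"
      by (rule psubset_card_mono[OF finT])
    moreover have vz: "(v,z) \<notin> F2\<^sup>*" using claim less.prems(5) by blast
    ultimately show False using less.hyps[OF _ maxF2 rootv less.prems(3,4) vz] unfolding T_def by blast
  qed
qed


lemma pclosed_mono: "pclosed E S \<Longrightarrow> G \<subseteq> E \<Longrightarrow> pclosed G S"
  unfolding pclosed_def by blast

lemma basis_pclosed: "basis_bicomponent V E K \<Longrightarrow> pclosed E K"
  unfolding basis_bicomponent_def pclosed_def by blast

lemma basis_sub: "basis_bicomponent V E K \<Longrightarrow> K \<subseteq> V"
  unfolding basis_bicomponent_def strong_component_def by blast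

lemma basis_strong: "basis_bicomponent V E K \<Longrightarrow> r1 \<in> K \<Longrightarrow> r2 \<in> K \<Longrightarrow> (r1,r2) \<in> E\<^sup>*"
  unfolding basis_bicomponent_def strong_component_def by (blast intro: rtrancl_trans)

lemma basis_exists:
  assumes finV: "finite V" and EV: "E \<subseteq> V \<times> V" and u: "u \<in> V"
  shows "\<exists>K'. basis_bicomponent V E K' \<and> (\<exists>k\<in>K'. (k,u) \<in> E\<^sup>*)"
proof -
  define anc where "anc x = {y\<in>V. (y,x) \<in> E\<^sup>*}" for x
  define P where "P x \<longleftrightarrow> x \<in> V \<and> (x,u) \<in> E\<^sup>*" for x
  have "P u" using u unfolding P_def by simp
  then obtain x where x: "P x" "\<forall>y. P y \<longrightarrow> card (anc x) \<le> card (anc y)"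
    using ex_has_least_nat[of P u "\<lambda>x. card (anc x)"] by blast
  have xV: "x \<in> V" and xu: "(x,u) \<in> E\<^sup>*" using x(1) unfolding P_def by auto
  define K' where "K' = strong_component V E x"
  have xK: "x \<in> K'" using xV unfolding K'_def strong_component_def by simp
  have "\<forall>p q. (p,q) \<in> E \<and> p \<notin> K' \<and> q \<in> K' \<longrightarrow> False"
  proof (intro allI impI)
    fix p q assume pq: "(p,q) \<in> E \<and> p \<notin> K' \<and> q \<in> K'"
    then have pV: "p \<in> V" using EV by blast
    have qx: "(q,x) \<in> E\<^sup>*" using pq unfolding K'_def strong_component_def by blast
    have px: "(p,x) \<in> E\<^sup>*" using pq qx by (blast intro: converse_rtrancl_into_rtrancl)
    have "P p" unfolding P_def using pV px xu by (blast intro: rtrancl_trans)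
    then have le: "card (anc x) \<le> card (anc p)" using x(2) by blast
    have sub: "anc p \<subseteq> anc x" unfolding anc_def using px by (blast intro: rtrancl_trans)
    have "x \<notin> anc p"
    proof
      assume "x \<in> anc p"
      then have "(x,p) \<in> E\<^sup>*" unfolding anc_def by blast
      then have "p \<in> K'" using pV px unfolding K'_def strong_component_def by blast
      then show False using pq by blast
    qed
    moreover have "x \<in> anc x" using xV unfolding anc_def by simp
    ultimately have "anc p \<subset> anc x" using sub by blast
    moreover have "finite (anc x)" using finV unfolding anc_def by simp
    ultimately have "card (anc p) < card (anc x)" by (simp add: psubset_card_mono)
    then show False using le by simp
  qed
  then have "basis_bicomponent V E K'" unfolding basis_bicomponent_def K'_def using xV by blast
  then show ?thesis using xK xu by blast
qed

lemma Kp_pclosed: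
  assumes finV: "finite V" and EV: "E \<subseteq> V \<times> V"
  shows "pclosed E (reach_plus V E K)"
  unfolding pclosed_def
proof (intro allI impI)
  fix u v assume uv: "(u,v) \<in> E" and v: "v \<in> reach_plus V E K"
  have uV: "u \<in> V" using uv EV by blast
  obtain K' k' where K': "basis_bicomponent V E K'" "k' \<in> K'" "(k',u) \<in> E\<^sup>*"
    using basis_exists[OF finV EV uV] by blast
  have "(k',v) \<in> E\<^sup>*" using K'(3) uv by (rule rtrancl.rtrancl_into_rtrancl)
  then have "K' = K" using v K'(1,2) unfolding reach_plus_def by blast
  then have r1: "\<exists>k\<in>K. (k,u) \<in> E\<^sup>*" using K' by blast
  have r2: "\<forall>K''. basis_bicomponent V E K'' \<and> K'' \<noteq> K \<longrightarrow> \<not> (\<exists>k\<in>K''. (k,u) \<in> E\<^sup>*)"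
  proof (intro allI impI notI)
    fix K'' assume a: "basis_bicomponent V E K'' \<and> K'' \<noteq> K" and "\<exists>k\<in>K''. (k,u) \<in> E\<^sup>*"
    then obtain k where k: "k \<in> K''" "(k,u) \<in> E\<^sup>*" by blast
    have "(k,v) \<in> E\<^sup>*" using k(2) uv by (rule rtrancl.rtrancl_into_rtrancl)
    then show False using v a k(1) unfolding reach_plus_def by blast
  qed
  show "u \<in> reach_plus V E K" unfolding reach_plus_def using uV r1 r2 by blast
qed

lemma max_props:
  assumes finV: "finite V" and EV: "E \<subseteq> V \<times> V" and F: "F \<in> max_out_forests V E"
  shows "F \<subseteq> E" "indeg1 F" "acyclic F" "finite F"
proof -
  have "out_forest V E F" using F unfolding max_out_forests_def by blast
  then show FE: "F \<subseteq> E" and "indeg1 F" "acyclic F" using of_imp[OF EV] by auto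
  show "finite F" using finite_subset[OF FE] finite_subset[OF EV] finV by simp
qed

lemma unique_root_K:
  assumes finV: "finite V" and EV: "E \<subseteq> V \<times> V" and B: "basis_bicomponent V E K"
    and F: "F \<in> max_out_forests V E"
    and r1: "r1 \<in> K" "\<forall>k. (k,r1) \<notin> F" and r2: "r2 \<in> K" "\<forall>k. (k,r2) \<notin> F"
  shows "r1 = r2"
proof (rule ccontr)
  assume ne: "r1 \<noteq> r2"
  have "(r1,r2) \<notin> F\<^sup>*" using root_reach[OF _ r2(2)] ne by blast
  moreover have "(r2,r1) \<in> E\<^sup>*" using basis_strong[OF B r2(1) r1(1)] .
  moreover have "r1 \<in> V" using basis_sub[OF B] r1(1) by blast
  ultimately show False using root_lemma[OF finV EV F r1(2)] by blast
qed

lemma D_inarc: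
  assumes finV: "finite V" and EV: "E \<subseteq> V \<times> V" and B: "basis_bicomponent V E K"
    and F: "F \<in> max_out_forests V E" and v: "v \<in> reach_plus V E K - K"
  shows "\<exists>u. (u,v) \<in> F"
proof (rule ccontr)
  assume "\<not> (\<exists>u. (u,v) \<in> F)"
  then have root: "\<forall>k. (k,v) \<notin> F" by blast
  obtain k where k: "k \<in> K" "(k,v) \<in> E\<^sup>*" using v unfolding reach_plus_def by blast
  have vV: "v \<in> V" using v unfolding reach_plus_def by blast
  have "(v,k) \<notin> F\<^sup>*"
  proof
    assume "(v,k) \<in> F\<^sup>*"
    then have "(v,k) \<in> E\<^sup>*" using rtrancl_mono[OF max_props(1)[OF finV EV F]] by blast
    then have "v \<in> K" using L_bwd[OF basis_pclosed[OF B] _ k(1)] by blast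
    then show False using v by blast
  qed
  then show False using root_lemma[OF finV EV F root vV k(2)] by blast
qed


lemma sum_factor:
  fixes f g :: "'b set \<Rightarrow> real"
  assumes finM: "finite M" and sw: "\<forall>F\<in>M. \<forall>F'\<in>M. (F \<inter> A) \<union> (F' - A) \<in> M"
  shows "(\<Sum>F\<in>M. f (F \<inter> A) * g (F - A)) =
         (\<Sum>X\<in>(\<lambda>F. F \<inter> A) ` M. f X) * (\<Sum>Y\<in>(\<lambda>F. F - A) ` M. g Y)"
proof -
  define h where "h F = (F \<inter> A, F - A)" for F
  have inj: "inj_on h M"
  proof (rule inj_onI)
    fix F F' assume "h F = h F'"
    then have "F \<inter> A = F' \<inter> A" "F - A = F' - A" unfolding h_def by auto
    then show "F = F'" by blast
  qed
  have img: "h ` M = ((\<lambda>F. F \<inter> A) ` M) \<times> ((\<lambda>F. F - A) ` M)"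
  proof
    show "h ` M \<subseteq> ((\<lambda>F. F \<inter> A) ` M) \<times> ((\<lambda>F. F - A) ` M)" unfolding h_def by blast
    show "((\<lambda>F. F \<inter> A) ` M) \<times> ((\<lambda>F. F - A) ` M) \<subseteq> h ` M"
    proof
      fix p assume "p \<in> ((\<lambda>F. F \<inter> A) ` M) \<times> ((\<lambda>F. F - A) ` M)"
      then obtain F1 F2 where F12: "F1 \<in> M" "F2 \<in> M" "p = (F1 \<inter> A, F2 - A)" by blast
      define G where "G = (F1 \<inter> A) \<union> (F2 - A)"
      have "G \<in> M" using sw F12 unfolding G_def by blast
      moreover have "h G = p" unfolding h_def G_def F12(3) by auto
      ultimately show "p \<in> h ` M" by blast
    qed
  qed
  have "(\<Sum>F\<in>M. f (F \<inter> A) * g (F - A)) = (\<Sum>F\<in>M. (\<lambda>p. f (fst p) * g (snd p)) (h F))"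
    unfolding h_def by simp
  also have "\<dots> = (\<Sum>p\<in>h ` M. f (fst p) * g (snd p))"
    using sum.reindex[OF inj, of "\<lambda>p. f (fst p) * g (snd p)"] by simp
  also have "\<dots> = (\<Sum>p\<in>((\<lambda>F. F \<inter> A) ` M) \<times> ((\<lambda>F. F - A) ` M). f (fst p) * g (snd p))"
    using img by simp
  also have "\<dots> = (\<Sum>X\<in>(\<lambda>F. F \<inter> A) ` M. \<Sum>Y\<in>(\<lambda>F. F - A) ` M. f X * g Y)"
    by (simp add: sum.cartesian_product case_prod_beta)
  also have "\<dots> = (\<Sum>X\<in>(\<lambda>F. F \<inter> A) ` M. f X) * (\<Sum>Y\<in>(\<lambda>F. F - A) ` M. g Y)"
    by (rule sum_product[symmetric])
  finally show ?thesis .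
qed

lemma weight_split:
  assumes "finite F"
  shows "subgraph_weight w F = subgraph_weight w (F \<inter> A) * subgraph_weight w (F - A)"
proof -
  have "F = (F \<inter> A) \<union> (F - A)" by blast
  then have "subgraph_weight w F = (\<Prod>e\<in>(F \<inter> A) \<union> (F - A). w e)" unfolding subgraph_weight_def by simp
  also have "\<dots> = (\<Prod>e\<in>F \<inter> A. w e) * (\<Prod>e\<in>F - A. w e)"
    by (rule prod.union_disjoint) (use assms in auto)
  finally show ?thesis unfolding subgraph_weight_def .
qed

lemma weight_pos:
  assumes "\<forall>e\<in>E. w e > 0" "F \<subseteq> E"
  shows "subgraph_weight w F > 0"
  unfolding subgraph_weight_def using assms by (intro prod_pos) blast


lemma glue1:
  assumes finV: "finite V" and EV: "E \<subseteq> V \<times> V" and B: "basis_bicomponent V E K"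
    and ofF: "out_forest V E F" and ofT: "out_forest K (Restr E K) T"
  shows "out_forest V E (T \<union> (F - K \<times> K))"
proof -
  have KV: "K \<subseteq> V" using basis_sub[OF B] .
  have finK: "finite K" using finite_subset[OF KV finV] .
  have EK: "Restr E K \<subseteq> K \<times> K" by blast
  have T: "T \<subseteq> Restr E K" "indeg1 T" "acyclic T" using of_imp[OF EK ofT] by auto
  have F: "F \<subseteq> E" "indeg1 F" "acyclic F" using of_imp[OF EV ofF] by auto
  have pcE: "pclosed E K" using basis_pclosed[OF B] .
  define G where "G = T \<union> (F - K \<times> K)"
  have GE: "G \<subseteq> E" unfolding G_def using T(1) F(1) by blast
  have into: "\<And>u v. (u,v) \<in> F - K \<times> K \<Longrightarrow> v \<notin> K"
    using F(1) pcE unfolding pclosed_def by blast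
  have indG: "indeg1 G" unfolding indeg1_def
  proof (intro allI impI)
    fix u u' v assume uv: "(u,v) \<in> G" "(u',v) \<in> G"
    show "u = u'"
    proof (cases "v \<in> K")
      case True
      then have "(u,v) \<in> T" "(u',v) \<in> T" using uv into unfolding G_def by blast+
      then show ?thesis using T(2) unfolding indeg1_def by blast
    next
      case False
      then have "(u,v) \<in> F" "(u',v) \<in> F" using uv T(1) unfolding G_def by blast+
      then show ?thesis using F(2) unfolding indeg1_def by blast
    qed
  qed
  have pcG: "pclosed G K" using pclosed_mono[OF pcE GE] .
  have "Restr G K \<subseteq> T" unfolding G_def by blast
  then have a1: "acyclic (Restr G K)" using acyclic_subset[OF T(3)] by blast
  have "G \<inter> ((-K) \<times> (-K)) \<subseteq> F" unfolding G_def using T(1) by blast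
  then have a2: "acyclic (G \<inter> ((-K) \<times> (-K)))" using acyclic_subset[OF F(3)] by blast
  have "acyclic G" using acyclic_split[OF pcG a1 a2] .
  then show ?thesis using imp_of[OF EV GE indG _ finV] unfolding G_def by blast
qed

lemma restr1:
  assumes finV: "finite V" and EV: "E \<subseteq> V \<times> V" and B: "basis_bicomponent V E K"
    and ofF: "out_forest V E F"
  shows "out_forest K (Restr E K) (Restr F K)"
proof -
  have KV: "K \<subseteq> V" using basis_sub[OF B] .
  have finK: "finite K" using finite_subset[OF KV finV] .
  have EK: "Restr E K \<subseteq> K \<times> K" by blast
  have F: "F \<subseteq> E" "indeg1 F" "acyclic F" using of_imp[OF EV ofF] by auto
  have "Restr F K \<subseteq> Restr E K" using F(1) by blast
  moreover have "indeg1 (Restr F K)" using indeg1_subset[OF F(2)] by blast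
  moreover have "acyclic (Restr F K)" using acyclic_subset[OF F(3)] by blast
  ultimately show ?thesis using imp_of[OF EK _ _ _ finK] by blast
qed

lemma part1_max:
  assumes finV: "finite V" and EV: "E \<subseteq> V \<times> V" and B: "basis_bicomponent V E K"
    and F: "F \<in> max_out_forests V E"
  shows "Restr F K \<in> max_out_forests K (Restr E K)"
    "\<And>T. T \<in> max_out_forests K (Restr E K) \<Longrightarrow> T \<union> (F - K \<times> K) \<in> max_out_forests V E"
proof -
  have ofF: "out_forest V E F" and maxF: "\<forall>G. out_forest V E G \<longrightarrow> card G \<le> card F"
    using F unfolding max_out_forests_def by auto
  have finF: "finite F" using max_props[OF finV EV F] by blast
  have cF: "card F = card (Restr F K) + card (F - K \<times> K)"
  proof -
    have "F = Restr F K \<union> (F - K \<times> K)" by blast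
    then have "card F = card (Restr F K \<union> (F - K \<times> K))" by simp
    also have "\<dots> = card (Restr F K) + card (F - K \<times> K)"
      by (rule card_Un_disjoint) (use finF in auto)
    finally show ?thesis .
  qed
  have cT: "card (T \<union> (F - K \<times> K)) = card T + card (F - K \<times> K)" if "out_forest K (Restr E K) T" for T
  proof -
    have "T \<subseteq> K \<times> K" using that unfolding out_forest_def by blast
    moreover have "finite (K \<times> K)" using finite_subset[OF basis_sub[OF B] finV] by simp
    ultimately show ?thesis by (intro card_Un_disjoint) (auto intro: finite_subset simp: finF)
  qed
  have rF: "out_forest K (Restr E K) (Restr F K)" using restr1[OF finV EV B ofF] .
  have mx: "\<forall>T. out_forest K (Restr E K) T \<longrightarrow> card T \<le> card (Restr F K)"
  proof (intro allI impI)
    fix T assume T: "out_forest K (Restr E K) T"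
    have "card (T \<union> (F - K \<times> K)) \<le> card F" using maxF glue1[OF finV EV B ofF T] by blast
    then show "card T \<le> card (Restr F K)" using cT[OF T] cF by simp
  qed
  then show "Restr F K \<in> max_out_forests K (Restr E K)" using rF unfolding max_out_forests_def by blast
  fix T assume T: "T \<in> max_out_forests K (Restr E K)"
  have ofT: "out_forest K (Restr E K) T" and "card (Restr F K) \<le> card T"
    using T rF unfolding max_out_forests_def by auto
  then have "card F \<le> card (T \<union> (F - K \<times> K))" using cT[OF ofT] cF by simp
  then show "T \<union> (F - K \<times> K) \<in> max_out_forests V E"
    using maxF glue1[OF finV EV B ofF ofT] unfolding max_out_forests_def by force
qed


lemma tree_restr:
  assumes B: "basis_bicomponent V E K" and FE: "F \<subseteq> E" and i: "i \<in> K" and j: "j \<in> K"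
  shows "in_tree_rooted_at F i j \<longleftrightarrow> in_tree_rooted_at (Restr F K) i j"
proof -
  have pc: "pclosed F K" using pclosed_mono[OF basis_pclosed[OF B] FE] .
  show ?thesis
  proof
    assume a: "in_tree_rooted_at F i j"
    then have "(j,i) \<in> F\<^sup>*" unfolding in_tree_rooted_at_def by blast
    then have "(j,i) \<in> (Restr F K)\<^sup>*" using L_bwd[OF pc _ i] by blast
    then show "in_tree_rooted_at (Restr F K) i j" using a unfolding in_tree_rooted_at_def by blast
  next
    assume a: "in_tree_rooted_at (Restr F K) i j"
    then have "(j,i) \<in> (Restr F K)\<^sup>*" unfolding in_tree_rooted_at_def by blast
    then have "(j,i) \<in> F\<^sup>*" using rtrancl_mono[of "Restr F K" F] by blast
    moreover have "\<forall>k. (k,j) \<notin> F"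
    proof (intro allI notI)
      fix k assume "(k,j) \<in> F"
      moreover then have "k \<in> K" using pc j unfolding pclosed_def by blast
      ultimately show False using a j unfolding in_tree_rooted_at_def by blast
    qed
    ultimately show "in_tree_rooted_at F i j" unfolding in_tree_rooted_at_def by blast
  qed
qed

lemma part1:
  assumes wd: "weighted_digraph V E w" and B: "basis_bicomponent V E K" and i: "i \<in> K" and j: "j \<in> K"
  shows "Jbar K (Restr E K) w i j = Jbar V E w i j"
proof -
  have finV: "finite V" and EV: "E \<subseteq> V \<times> V" and wpos: "\<forall>e\<in>E. w e > 0"
    using wd unfolding weighted_digraph_def by auto
  define M where "M = max_out_forests V E"
  define MK where "MK = max_out_forests K (Restr E K)"
  define A where "A = K \<times> K"
  define wt where "wt = subgraph_weight w"
  have KV: "K \<subseteq> V" using basis_sub[OF B] .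
  have finK: "finite K" using finite_subset[OF KV finV] .
  have finM: "finite M" unfolding M_def using max_finite[OF finV EV] .
  have neM: "M \<noteq> {}" unfolding M_def using max_nonempty[OF finV EV] .
  have finMK: "finite MK" unfolding MK_def using max_finite[OF finK] by blast
  have sw: "\<forall>F\<in>M. \<forall>F'\<in>M. (F \<inter> A) \<union> (F' - A) \<in> M"
    unfolding M_def A_def using part1_max[OF finV EV B] by blast
  have imgA: "(\<lambda>F. F \<inter> A) ` M = MK"
  proof
    show "(\<lambda>F. F \<inter> A) ` M \<subseteq> MK" unfolding M_def MK_def A_def using part1_max(1)[OF finV EV B] by blast
    show "MK \<subseteq> (\<lambda>F. F \<inter> A) ` M"
    proof
      fix T assume T: "T \<in> MK"
      obtain F0 where F0: "F0 \<in> M" using neM by blast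
      have G: "T \<union> (F0 - A) \<in> M" using part1_max(2)[OF finV EV B _ ] F0 T unfolding M_def MK_def A_def by blast
      have "T \<subseteq> A" using T unfolding MK_def max_out_forests_def out_forest_def A_def by blast
      then have "T = (T \<union> (F0 - A)) \<inter> A" by blast
      then show "T \<in> (\<lambda>F. F \<inter> A) ` M" using G by blast
    qed
  qed
  have FE: "F \<subseteq> E" and finF: "finite F" if "F \<in> M" for F
    using max_props[OF finV EV] that unfolding M_def by auto
  have split: "wt F = wt (F \<inter> A) * wt (F - A)" if "F \<in> M" for F
    unfolding wt_def using weight_split[OF finF[OF that]] .
  have tr: "in_tree_rooted_at F i j \<longleftrightarrow> in_tree_rooted_at (F \<inter> A) i j" if "F \<in> M" for F
    unfolding A_def using tree_restr[OF B FE[OF that] i j] .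
  define S2 where "S2 = (\<Sum>Y\<in>(\<lambda>F. F - A) ` M. wt Y)"
  have S2pos: "S2 > 0" unfolding S2_def
  proof (rule sum_pos)
    show "finite ((\<lambda>F. F - A) ` M)" using finM by simp
    show "(\<lambda>F. F - A) ` M \<noteq> {}" using neM by simp
    fix Y assume "Y \<in> (\<lambda>F. F - A) ` M"
    then obtain F where "F \<in> M" "Y = F - A" by blast
    then have "Y \<subseteq> E" using FE by blast
    then show "0 < wt Y" unfolding wt_def using weight_pos[OF wpos] by blast
  qed
  have num: "(\<Sum>F\<in>{F\<in>M. in_tree_rooted_at F i j}. wt F)
      = (\<Sum>X\<in>{X\<in>MK. in_tree_rooted_at X i j}. wt X) * S2"
  proof -
    have "(\<Sum>F\<in>{F\<in>M. in_tree_rooted_at F i j}. wt F) = (\<Sum>F\<in>M. if in_tree_rooted_at F i j then wt F else 0)"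
      by (rule sum.inter_filter[OF finM])
    also have "\<dots> = (\<Sum>F\<in>M. (\<lambda>X. if in_tree_rooted_at X i j then wt X else 0) (F \<inter> A) * wt (F - A))"
      by (rule sum.cong) (auto simp: tr split)
    also have "\<dots> = (\<Sum>X\<in>MK. if in_tree_rooted_at X i j then wt X else 0) * S2"
      unfolding S2_def using sum_factor[OF finM sw] imgA by simp
    also have "(\<Sum>X\<in>MK. if in_tree_rooted_at X i j then wt X else 0) = (\<Sum>X\<in>{X\<in>MK. in_tree_rooted_at X i j}. wt X)"
      by (rule sum.inter_filter[OF finMK, symmetric])
    finally show ?thesis .
  qed
  have den: "(\<Sum>F\<in>M. wt F) = (\<Sum>X\<in>MK. wt X) * S2"
  proof -
    have "(\<Sum>F\<in>M. wt F) = (\<Sum>F\<in>M. wt (F \<inter> A) * wt (F - A))"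
      by (rule sum.cong) (auto simp: split)
    also have "\<dots> = (\<Sum>X\<in>MK. wt X) * S2"
      unfolding S2_def using sum_factor[OF finM sw] imgA by simp
    finally show ?thesis .
  qed
  have "Jbar V E w i j = ((\<Sum>X\<in>{X\<in>MK. in_tree_rooted_at X i j}. wt X) * S2) / ((\<Sum>X\<in>MK. wt X) * S2)"
    unfolding Jbar_def using num den unfolding M_def wt_def by simp
  also have "\<dots> = (\<Sum>X\<in>{X\<in>MK. in_tree_rooted_at X i j}. wt X) / (\<Sum>X\<in>MK. wt X)"
    using S2pos by simp
  also have "\<dots> = Jbar K (Restr E K) w i j" unfolding Jbar_def MK_def wt_def by simp
  finally show ?thesis by simp
qed


lemma cardA:
  assumes finV: "finite V" and EV: "E \<subseteq> V \<times> V" and B: "basis_bicomponent V E K"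
    and F: "F \<in> max_out_forests V E" and D: "D = reach_plus V E K - K" and A: "A = {e. snd e \<in> D}"
  shows "card (F \<inter> A) = card D"
proof -
  have ind: "indeg1 F" using max_props[OF finV EV F] by blast
  have "snd ` (F \<inter> A) = D"
  proof
    show "snd ` (F \<inter> A) \<subseteq> D" unfolding A by force
    show "D \<subseteq> snd ` (F \<inter> A)"
    proof
      fix v assume v: "v \<in> D"
      then obtain u where "(u,v) \<in> F" using D_inarc[OF finV EV B F] D by blast
      then have "(u,v) \<in> F \<inter> A" using v A by simp
      then show "v \<in> snd ` (F \<inter> A)" by force
    qed
  qed
  moreover have "inj_on snd (F \<inter> A)" using ind unfolding indeg1_def inj_on_def by auto
  ultimately show ?thesis using card_image by fastforce
qed

lemma swap2:
  assumes finV: "finite V" and EV: "E \<subseteq> V \<times> V" and B: "basis_bicomponent V E K"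
    and F: "F \<in> max_out_forests V E" and F': "F' \<in> max_out_forests V E"
    and D: "D = reach_plus V E K - K" and A: "A = {e. snd e \<in> D}"
  shows "(F \<inter> A) \<union> (F' - A) \<in> max_out_forests V E"
proof -
  define Kp where "Kp = reach_plus V E K"
  have PF: "F \<subseteq> E" "indeg1 F" "acyclic F" "finite F" using max_props[OF finV EV F] by auto
  have PF': "F' \<subseteq> E" "indeg1 F'" "acyclic F'" "finite F'" using max_props[OF finV EV F'] by auto
  define G where "G = (F \<inter> A) \<union> (F' - A)"
  have GE: "G \<subseteq> E" unfolding G_def using PF(1) PF'(1) by blast
  have indG: "indeg1 G" unfolding indeg1_def
  proof (intro allI impI)
    fix u u' v assume uv: "(u,v) \<in> G" "(u',v) \<in> G"
    show "u = u'"
    proof (cases "v \<in> D")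
      case True
      then have "(u,v) \<in> F" "(u',v) \<in> F" using uv unfolding G_def A by auto
      then show ?thesis using PF(2) unfolding indeg1_def by blast
    next
      case False
      then have "(u,v) \<in> F'" "(u',v) \<in> F'" using uv unfolding G_def A by auto
      then show ?thesis using PF'(2) unfolding indeg1_def by blast
    qed
  qed
  have pcKp: "pclosed G Kp" unfolding Kp_def using pclosed_mono[OF Kp_pclosed[OF finV EV] GE] .
  have pcK: "pclosed (Restr G Kp) K" using pclosed_mono[OF basis_pclosed[OF B]] GE by blast
  have "Restr (Restr G Kp) K \<subseteq> F'" unfolding G_def A D by auto
  then have a1: "acyclic (Restr (Restr G Kp) K)" using acyclic_subset[OF PF'(3)] by blast
  have "(Restr G Kp) \<inter> ((-K) \<times> (-K)) \<subseteq> F" unfolding G_def A D Kp_def by auto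
  then have a2: "acyclic ((Restr G Kp) \<inter> ((-K) \<times> (-K)))" using acyclic_subset[OF PF(3)] by blast
  have a3: "acyclic (Restr G Kp)" using acyclic_split[OF pcK a1 a2] .
  have "G \<inter> ((-Kp) \<times> (-Kp)) \<subseteq> F'" unfolding G_def A D Kp_def by auto
  then have a4: "acyclic (G \<inter> ((-Kp) \<times> (-Kp)))" using acyclic_subset[OF PF'(3)] by blast
  have acG: "acyclic G" using acyclic_split[OF pcKp a3 a4] .
  have ofG: "out_forest V E G" using imp_of[OF EV GE indG acG finV] .
  have cG: "card G = card (F \<inter> A) + card (F' - A)"
    unfolding G_def by (rule card_Un_disjoint) (use PF PF' in auto)
  have cF': "card F' = card (F' \<inter> A) + card (F' - A)"
  proof -
    have "F' = (F' \<inter> A) \<union> (F' - A)" by blast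
    then have "card F' = card ((F' \<inter> A) \<union> (F' - A))" by simp
    also have "\<dots> = card (F' \<inter> A) + card (F' - A)" by (rule card_Un_disjoint) (use PF' in auto)
    finally show ?thesis .
  qed
  have "card (F \<inter> A) = card (F' \<inter> A)" using cardA[OF finV EV B F D A] cardA[OF finV EV B F' D A] by simp
  then have "card G = card F'" using cG cF' by simp
  then show ?thesis using ofG F' unfolding G_def max_out_forests_def by simp
qed

lemma inv2:
  assumes finV: "finite V" and EV: "E \<subseteq> V \<times> V" and B: "basis_bicomponent V E K"
    and F: "F \<in> max_out_forests V E" and F': "F' \<in> max_out_forests V E"
    and D: "D = reach_plus V E K - K" and A: "A = {e. snd e \<in> D}" and H: "F - A = F' - A"
  shows "in_tree_rooted_at F i j \<longleftrightarrow> in_tree_rooted_at F' i j"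
proof -
  define Kp where "Kp = reach_plus V E K"
  have PF: "F \<subseteq> E" "indeg1 F" "acyclic F" "finite F" using max_props[OF finV EV F] by auto
  have PF': "F' \<subseteq> E" "indeg1 F'" "acyclic F'" "finite F'" using max_props[OF finV EV F'] by auto
  have S1: "(r,i) \<in> (G - A)\<^sup>*" if G: "G \<in> max_out_forests V E" and t: "in_tree_rooted_at G i r" and r: "r \<notin> Kp" for G r
  proof -
    have GE: "G \<subseteq> E" using max_props[OF finV EV G] by blast
    have pc: "pclosed G Kp" unfolding Kp_def using pclosed_mono[OF Kp_pclosed[OF finV EV] GE] .
    have "(r,i) \<in> G\<^sup>*" using t unfolding in_tree_rooted_at_def by blast
    then have "(r,i) \<in> (G \<inter> ((-Kp) \<times> (-Kp)))\<^sup>*" using L_fwd[OF pc _ r] by blast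
    moreover have "G \<inter> ((-Kp) \<times> (-Kp)) \<subseteq> G - A" unfolding A D Kp_def by auto
    ultimately show ?thesis using rtrancl_mono by blast
  qed
  have S2: "r \<in> K" if G: "G \<in> max_out_forests V E" and t: "in_tree_rooted_at G i r" and r: "r \<in> Kp" for G r
  proof (rule ccontr)
    assume "r \<notin> K"
    then have "r \<in> reach_plus V E K - K" using r unfolding Kp_def by blast
    then obtain u where "(u,r) \<in> G" using D_inarc[OF finV EV B G] by blast
    then show False using t unfolding in_tree_rooted_at_def by blast
  qed
  have S3: "\<forall>k. (k,r) \<notin> G'" if "\<forall>k. (k,r) \<notin> G" "r \<notin> D" "G - A = G' - A" for G G' r
  proof (intro allI notI)
    fix k assume "(k,r) \<in> G'"
    then have "(k,r) \<in> G' - A" using that(2) unfolding A by simp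
    then have "(k,r) \<in> G" using that(3) by blast
    then show False using that(1) by blast
  qed
  have DKp: "D \<subseteq> Kp" unfolding D Kp_def by blast
  have DK: "D \<inter> K = {}" unfolding D by blast
  have trans: "in_tree_rooted_at G2 i r"
    if G1: "G1 \<in> max_out_forests V E" and G2: "G2 \<in> max_out_forests V E" and HH: "G1 - A = G2 - A"
      and t: "in_tree_rooted_at G1 i r" and r: "r \<notin> Kp" for G1 G2 r
  proof -
    have "(r,i) \<in> (G2 - A)\<^sup>*" using S1[OF G1 t r] HH by simp
    then have "(r,i) \<in> G2\<^sup>*" using rtrancl_mono[of "G2 - A" G2] by blast
    moreover have "\<forall>k. (k,r) \<notin> G2" using S3[of r G1 G2] t r DKp HH unfolding in_tree_rooted_at_def by blast
    ultimately show ?thesis unfolding in_tree_rooted_at_def by blast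
  qed
  obtain r where r: "in_tree_rooted_at F i r" using root_exists[OF PF(4) PF(3)] by blast
  have rF': "in_tree_rooted_at F' i r"
  proof (cases "r \<in> Kp")
    case False
    then show ?thesis using trans[OF F F' H r] by blast
  next
    case True
    then have rK: "r \<in> K" using S2[OF F r] by blast
    obtain r' where r': "in_tree_rooted_at F' i r'" using root_exists[OF PF'(4) PF'(3)] by blast
    have r'Kp: "r' \<in> Kp"
    proof (rule ccontr)
      assume "r' \<notin> Kp"
      then have "in_tree_rooted_at F i r'" using trans[OF F' F H[symmetric] r'] by blast
      then have "r' = r" using root_unique[OF PF(2) _ r] by blast
      then show False using True \<open>r' \<notin> Kp\<close> by blast
    qed
    then have r'K: "r' \<in> K" using S2[OF F' r'] by blast
    have rootr: "\<forall>k. (k,r) \<notin> F'" using S3[of r F F'] r rK DK H unfolding in_tree_rooted_at_def by blast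
    have "r = r'" using unique_root_K[OF finV EV B F' rK rootr r'K] r' unfolding in_tree_rooted_at_def by blast
    then show ?thesis using r' by simp
  qed
  show ?thesis
  proof
    assume "in_tree_rooted_at F i j"
    then have "j = r" using root_unique[OF PF(2) _ r] by blast
    then show "in_tree_rooted_at F' i j" using rF' by simp
  next
    assume "in_tree_rooted_at F' i j"
    then have "j = r" using root_unique[OF PF'(2) _ rF'] by blast
    then show "in_tree_rooted_at F i j" using r by simp
  qed
qed


lemma part2_formula:
  assumes wd: "weighted_digraph V E w" and B: "basis_bicomponent V E K"
    and D: "D = reach_plus V E K - K" and A: "A = {e. snd e \<in> D}"
    and M: "M = max_out_forests V E" and F0: "F0 \<in> M"
    and w1p: "\<forall>e\<in>E. w1 e > 0" and w1e: "\<forall>e. e \<notin> A \<longrightarrow> w1 e = w e"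
  shows "Jbar V E w1 i j =
     (\<Sum>Y\<in>{Y\<in>(\<lambda>F. F - A) ` M. in_tree_rooted_at (Y \<union> (F0 \<inter> A)) i j}. subgraph_weight w Y)
     / (\<Sum>Y\<in>(\<lambda>F. F - A) ` M. subgraph_weight w Y)"
proof -
  have finV: "finite V" and EV: "E \<subseteq> V \<times> V"
    using wd unfolding weighted_digraph_def by auto
  define P2 where "P2 = (\<lambda>F. F - A) ` M"
  define p where "p Y = in_tree_rooted_at (Y \<union> (F0 \<inter> A)) i j" for Y
  define wt1 where "wt1 = subgraph_weight w1"
  define wt where "wt = subgraph_weight w"
  have finM: "finite M" unfolding M using max_finite[OF finV EV] .
  have neM: "M \<noteq> {}" using F0 by blast
  have FE: "F \<subseteq> E" and finF: "finite F" if "F \<in> M" for F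
    using max_props[OF finV EV] that unfolding M by auto
  have sw: "\<forall>F\<in>M. \<forall>F'\<in>M. (F \<inter> A) \<union> (F' - A) \<in> M"
    unfolding M using swap2[OF finV EV B _ _ D A] by blast
  have trp: "in_tree_rooted_at F i j \<longleftrightarrow> p (F - A)" if F: "F \<in> M" for F
  proof -
    define G where "G = (F0 \<inter> A) \<union> (F - A)"
    have G: "G \<in> M" using sw F0 F unfolding G_def by blast
    have "F - A = G - A" unfolding G_def by blast
    then have "in_tree_rooted_at F i j \<longleftrightarrow> in_tree_rooted_at G i j"
      using inv2[OF finV EV B _ _ D A] F G unfolding M by blast
    moreover have "G = (F - A) \<union> (F0 \<inter> A)" unfolding G_def by blast
    ultimately show ?thesis unfolding p_def by simp
  qed
  have split1: "wt1 F = wt1 (F \<inter> A) * wt1 (F - A)" if "F \<in> M" for F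
    unfolding wt1_def using weight_split[OF finF[OF that]] .
  have wsame: "wt1 Y = wt Y" if "Y \<in> P2" for Y
  proof -
    have "\<forall>e\<in>Y. e \<notin> A" using that unfolding P2_def by blast
    then show ?thesis unfolding wt1_def wt_def subgraph_weight_def using w1e by (intro prod.cong) auto
  qed
  define S1 where "S1 = (\<Sum>X\<in>(\<lambda>F. F \<inter> A) ` M. wt1 X)"
  have S1pos: "S1 > 0" unfolding S1_def
  proof (rule sum_pos)
    show "finite ((\<lambda>F. F \<inter> A) ` M)" using finM by simp
    show "(\<lambda>F. F \<inter> A) ` M \<noteq> {}" using neM by simp
    fix X assume "X \<in> (\<lambda>F. F \<inter> A) ` M"
    then obtain F where "F \<in> M" "X = F \<inter> A" by blast
    then have "X \<subseteq> E" using FE by blast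
    then show "0 < wt1 X" unfolding wt1_def using weight_pos[OF w1p] by blast
  qed
  have finP2: "finite P2" unfolding P2_def using finM by simp
  have num: "(\<Sum>F\<in>{F\<in>M. in_tree_rooted_at F i j}. wt1 F) = S1 * (\<Sum>Y\<in>{Y\<in>P2. p Y}. wt Y)"
  proof -
    have "(\<Sum>F\<in>{F\<in>M. in_tree_rooted_at F i j}. wt1 F) = (\<Sum>F\<in>M. if in_tree_rooted_at F i j then wt1 F else 0)"
      by (rule sum.inter_filter[OF finM])
    also have "\<dots> = (\<Sum>F\<in>M. wt1 (F \<inter> A) * (\<lambda>Y. if p Y then wt1 Y else 0) (F - A))"
      by (rule sum.cong) (auto simp: trp split1)
    also have "\<dots> = S1 * (\<Sum>Y\<in>P2. if p Y then wt1 Y else 0)"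
      unfolding S1_def P2_def using sum_factor[OF finM sw] by simp
    also have "(\<Sum>Y\<in>P2. if p Y then wt1 Y else 0) = (\<Sum>Y\<in>P2. if p Y then wt Y else 0)"
      by (rule sum.cong) (auto simp: wsame)
    also have "\<dots> = (\<Sum>Y\<in>{Y\<in>P2. p Y}. wt Y)"
      by (rule sum.inter_filter[OF finP2, symmetric])
    finally show ?thesis .
  qed
  have den: "(\<Sum>F\<in>M. wt1 F) = S1 * (\<Sum>Y\<in>P2. wt Y)"
  proof -
    have "(\<Sum>F\<in>M. wt1 F) = (\<Sum>F\<in>M. wt1 (F \<inter> A) * wt1 (F - A))"
      by (rule sum.cong) (auto simp: split1)
    also have "\<dots> = S1 * (\<Sum>Y\<in>P2. wt1 Y)"
      unfolding S1_def P2_def using sum_factor[OF finM sw] by simp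
    also have "(\<Sum>Y\<in>P2. wt1 Y) = (\<Sum>Y\<in>P2. wt Y)"
      by (rule sum.cong) (auto simp: wsame)
    finally show ?thesis .
  qed
  have "Jbar V E w1 i j = (S1 * (\<Sum>Y\<in>{Y\<in>P2. p Y}. wt Y)) / (S1 * (\<Sum>Y\<in>P2. wt Y))"
    unfolding Jbar_def using num den unfolding M wt1_def by simp
  also have "\<dots> = (\<Sum>Y\<in>{Y\<in>P2. p Y}. wt Y) / (\<Sum>Y\<in>P2. wt Y)"
    using S1pos by simp
  finally show ?thesis unfolding P2_def p_def wt_def .
qed

theorem corollary2:
  fixes V :: "'a set" and E :: "('a \<times> 'a) set" and w :: "'a \<times> 'a \<Rightarrow> real" and K :: "'a set"
  assumes "weighted_digraph V E w"
    and "basis_bicomponent V E K"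
  shows "(\<forall>i\<in>K. \<forall>j\<in>K. Jbar K (E \<inter> (K \<times> K)) w i j = Jbar V E w i j)
       \<and> (\<forall>a b. a \<in> reach_plus V E K \<and> b \<in> reach_plus V E K - K \<and> (a, b) \<in> E \<longrightarrow>
            (\<forall>c::real. c > 0 \<longrightarrow>
               (\<forall>i\<in>V. \<forall>j\<in>V. Jbar V E (w((a, b) := c)) i j = Jbar V E w i j)))"
proof (intro conjI allI impI ballI)
  fix i j assume "i \<in> K" "j \<in> K"
  then show "Jbar K (E \<inter> (K \<times> K)) w i j = Jbar V E w i j" using part1[OF assms] by blast
next
  fix a b c i j
  assume ab: "a \<in> reach_plus V E K \<and> b \<in> reach_plus V E K - K \<and> (a, b) \<in> E" and c: "(c::real) > 0"
    and "i \<in> V" "j \<in> V"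
  have finV: "finite V" and EV: "E \<subseteq> V \<times> V" and wpos: "\<forall>e\<in>E. w e > 0"
    using assms(1) unfolding weighted_digraph_def by auto
  define D where "D = reach_plus V E K - K"
  define A :: "('a \<times> 'a) set" where "A = {e. snd e \<in> D}"
  define M where "M = max_out_forests V E"
  obtain F0 where F0: "F0 \<in> M" using max_nonempty[OF finV EV] unfolding M_def by blast
  have abA: "(a,b) \<in> A" using ab unfolding A_def D_def by simp
  have p1: "\<forall>e\<in>E. (w((a, b) := c)) e > 0" using wpos c by simp
  have e1: "\<forall>e. e \<notin> A \<longrightarrow> (w((a, b) := c)) e = w e" using abA by auto
  have p2: "\<forall>e\<in>E. w e > 0" using wpos .
  have e2: "\<forall>e. e \<notin> A \<longrightarrow> w e = w e" by simp
  note h1 = part2_formula[OF assms(1,2) D_def A_def M_def F0 p1 e1, of i j]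
  note h2 = part2_formula[OF assms(1,2) D_def A_def M_def F0 p2 e2, of i j]
  show "Jbar V E (w((a, b) := c)) i j = Jbar V E w i j"
    by (rule trans[OF h1 h2[symmetric]])
qed

end
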